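(* Let $p,q$ be coprime integers with $|p|\ge 2$ and $|q|\ge 2$, let $T=T(p,q)$, write $c=c(T)$, and set $\rho=\rho(T)=\left|\frac{6v_3(T)}{v_2(T)}\right|$. Then $$24\,v_2(T)\,(c-\rho)^2=c\left((c-\rho)^2-1\right)(2\rho-c),$$ and $$c=\rho-\tfrac{1}{2}\left(\sqrt{(\rho-1)^2-24v_2(T)}+\sqrt{(\rho+1)^2-24v_2(T)}\right).$$
   Context: $v_2$ and $v_3$ are the first two Vassiliev knot invariants, normalized as follows. The space of additive Vassiliev invariants of type three splits into invariants unchanged under taking mirror images and invariants that change sign under mirror image; $v_2$ (resp.\ $v_3$) is the element of the first (resp.\ second) one-dimensional summand taking the value $1$ on the positive trefoil. For coprime integers $p,q$ with $|p|,|q|\ge 2$, $T(p,q)$ denotes the (nontrivial) $(p,q)$-torus knot, and its invariants are known to be $$v_2(T(p,q))=\tfrac{1}{24}(p^2-1)(q^2-1),\qquad v_3(T(p,q))=\tfrac{1}{144}\,pq\,(p^2-1)(q^2-1).$$ $c(T)$ denotes the crossing number; for torus knots it is known that $c(T(p,q))=|q|(|p|-1)$ when $|p|<|q|$ (and symmetrically $c(T(p,q))=|p|(|q|-1)$ when $|q|<|p|$). *)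

theory Defs
  imports Complex_Main
begin

text \<open>The torus knot T(p,q) is
represented by its parameters (p,q), and the invariants v2, v3 and the crossing
number c are given by the values stated as known in the context.\<close>

definition v2_torus :: "int \<Rightarrow> int \<Rightarrow> real" where
  "v2_torus p q = (real_of_int p ^ 2 - 1) * (real_of_int q ^ 2 - 1) / 24"

definition v3_torus :: "int \<Rightarrow> int \<Rightarrow> real" where
  "v3_torus p q = real_of_int p * real_of_int q * (real_of_int p ^ 2 - 1) * (real_of_int q ^ 2 - 1) / 144"

definition crossing_torus :: "int \<Rightarrow> int \<Rightarrow> real" where
  "crossing_torus p q =
     (if \<bar>p\<bar> < \<bar>q\<bar> then real_of_int (\<bar>q\<bar> * (\<bar>p\<bar> - 1))
      else real_of_int (\<bar>p\<bar> * (\<bar>q\<bar> - 1)))"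

definition rho_torus :: "int \<Rightarrow> int \<Rightarrow> real" where
  "rho_torus p q = \<bar>6 * v3_torus p q / v2_torus p q\<bar>"

end

theory Submission
  imports Defs
begin

theorem proposition3p6:
  fixes p q :: int
  assumes "coprime p q" and "\<bar>p\<bar> \<ge> 2" and "\<bar>q\<bar> \<ge> 2"
  shows "24 * v2_torus p q * (crossing_torus p q - rho_torus p q)^2
           = crossing_torus p q * ((crossing_torus p q - rho_torus p q)^2 - 1)
             * (2 * rho_torus p q - crossing_torus p q)
         \<and> crossing_torus p q = rho_torus p q
           - (sqrt ((rho_torus p q - 1)^2 - 24 * v2_torus p q)
              + sqrt ((rho_torus p q + 1)^2 - 24 * v2_torus p q)) / 2"
proof -
  define a where "a = real_of_int \<bar>p\<bar>"
  define b where "b = real_of_int \<bar>q\<bar>"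
  have a2: "a \<ge> 2" and b2: "b \<ge> 2" using assms by (auto simp: a_def b_def)
  have pa: "real_of_int p ^ 2 = a ^ 2" by (simp add: a_def)
  have qb: "real_of_int q ^ 2 = b ^ 2" by (simp add: b_def)
  have v2: "v2_torus p q = (a^2 - 1) * (b^2 - 1) / 24"
    by (simp add: v2_torus_def pa qb)
  have nz: "(a^2 - 1) * (b^2 - 1) \<noteq> 0"
  proof -
    have "a*a \<ge> 2*a" "b*b \<ge> 2*b" using a2 b2 by simp_all
    hence "a*a > 1" "b*b > 1" using a2 b2 by linarith+
    hence "a^2 - 1 > 0" "b^2 - 1 > 0" by (simp_all add: power2_eq_square)
    thus ?thesis by simp
  qed
  have rho: "rho_torus p q = a * b"
  proof -
    have "6 * v3_torus p q / v2_torus p q = real_of_int p * real_of_int q"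
      using nz unfolding v3_torus_def v2 pa qb by (simp add: field_simps)
    thus ?thesis by (simp add: rho_torus_def a_def b_def abs_mult)
  qed
  have sq: "\<And>x y::real. x \<ge> 0 \<Longrightarrow> y = x^2 \<Longrightarrow> sqrt y = x" by simp
  have neq: "\<bar>p\<bar> \<noteq> \<bar>q\<bar>"
  proof
    assume h: "\<bar>p\<bar> = \<bar>q\<bar>"
    have "coprime \<bar>p\<bar> \<bar>q\<bar>" using assms(1) by simp
    hence "coprime \<bar>p\<bar> \<bar>p\<bar>" using h by metis
    hence "is_unit \<bar>p\<bar>" by simp
    thus False using assms(2) by simp
  qed
  show ?thesis
  proof (cases "\<bar>p\<bar> < \<bar>q\<bar>")
    case True
    have ab: "a < b" using True by (simp add: a_def b_def)
    have c: "crossing_torus p q = b * (a - 1)"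
      using True by (simp add: crossing_torus_def a_def b_def)
    have s1: "sqrt ((a*b - 1)^2 - (a^2 - 1) * (b^2 - 1)) = b - a"
      by (rule sq) (use ab in simp, algebra)
    have s2: "sqrt ((a*b + 1)^2 - (a^2 - 1) * (b^2 - 1)) = b + a"
      by (rule sq) (use a2 b2 in simp, algebra)
    have e1: "24 * ((a^2 - 1) * (b^2 - 1) / 24) = (a^2 - 1) * (b^2 - 1)" by simp
    show ?thesis unfolding c rho v2 e1 s1 s2
      by (intro conjI; algebra)
  next
    case False
    hence ab: "b < a" using neq by (simp add: a_def b_def)
    have c: "crossing_torus p q = a * (b - 1)"
      using False by (simp add: crossing_torus_def a_def b_def)
    have s1: "sqrt ((a*b - 1)^2 - (a^2 - 1) * (b^2 - 1)) = a - b"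
      by (rule sq) (use ab in simp, algebra)
    have s2: "sqrt ((a*b + 1)^2 - (a^2 - 1) * (b^2 - 1)) = b + a"
      by (rule sq) (use a2 b2 in simp, algebra)
    have e1: "24 * ((a^2 - 1) * (b^2 - 1) / 24) = (a^2 - 1) * (b^2 - 1)" by simp
    show ?thesis unfolding c rho v2 e1 s1 s2
      by (intro conjI; algebra)
  qed
qed

end
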